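(* Let $p\ge3$ be a prime, let $c_1,c_2\in(0,1/2]$, and let $D_1,D_2$ be probability distributions on $\mathbb{F}_p$ with $D_i(x)\le1-c_i$ for all $x\in\mathbb{F}_p$ and $i=1,2$. Let $\epsilon>0$, let $n_1,n_2$ be positive integers, and let $b:\mathbb{F}_p^{n_1}\times\mathbb{F}_p^{n_2}\to\mathbb{F}_p$ be a bilinear form with $|\mathrm{bias}_{t,(D_1,D_2)}b|\ge\epsilon$ for some $t\in\mathbb{F}_p^*$. Then $b$ has rank at most $K_{p,c_1,c_2}(\epsilon)=2c_1^{-1}c_2^{-1}\pi^{-2}p^2\log(2ep/c_1)\log(3/\epsilon)$.
   Context: $\omega_p=\exp(2\pi i/p)$. $\mathrm{bias}_{t,(D_1,D_2)}b=\mathbb{E}_{x\sim D_1^{n_1},\,y\sim D_2^{n_2}}\omega_p^{t\,b(x,y)}$, with product distributions having independent coordinates. The rank of $b$ is the rank of its coefficient matrix. *)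

theory Defs
  imports Complex_Main "HOL-Probability.Probability_Mass_Function"
    "Jordan_Normal_Form.DL_Rank" "Berlekamp_Zassenhaus.Finite_Field"
begin

text \<open>F_p is the type 'p mod_ring with 'p of prime cardinality p = CARD('p).
  Elements of F_p^n are functions {..<n} -> F_p (extensional).
  A bilinear form b on F_p^n1 x F_p^n2 is given by its coefficient matrix B
  (an n1 x n2 matrix over F_p): b(x,y) = sum_i sum_j x_i B_ij y_j.\<close>

definition bil_form :: "'p::prime_card mod_ring mat \<Rightarrow> (nat \<Rightarrow> 'p mod_ring) \<Rightarrow> (nat \<Rightarrow> 'p mod_ring) \<Rightarrow> 'p mod_ring" where
  "bil_form B x y = (\<Sum>i<dim_row B. \<Sum>j<dim_col B. x i * B $$ (i, j) * y j)"

definition omega_pow :: "'p::prime_card mod_ring \<Rightarrow> complex" where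
  "omega_pow a = cis (2 * pi * real_of_int (to_int_mod_ring a) / real CARD('p))"

text \<open>bias_{t,(D1,D2)} b = E_{x ~ D1^n1, y ~ D2^n2} omega_p^{t b(x,y)}, with
  product distributions (independent coordinates).\<close>
definition bias :: "'p::prime_card mod_ring \<Rightarrow> 'p mod_ring pmf \<Rightarrow> 'p mod_ring pmf \<Rightarrow> 'p mod_ring mat \<Rightarrow> complex" where
  "bias t D1 D2 B =
     (\<Sum>x\<in>PiE {..<dim_row B} (\<lambda>_. UNIV). \<Sum>y\<in>PiE {..<dim_col B} (\<lambda>_. UNIV).
        complex_of_real ((\<Prod>i<dim_row B. pmf D1 (x i)) * (\<Prod>j<dim_col B. pmf D2 (y j)))
        * omega_pow (t * bil_form B x y))"

definition bil_rank :: "'p::prime_card mod_ring mat \<Rightarrow> nat" where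
  "bil_rank B = vec_space.rank (dim_row B) B"

end

theory Submission
  imports Defs "HOL-Analysis.Complex_Transcendental"
begin

lemma omega_pow_add:
  fixes a b :: "'p::prime_card mod_ring"
  shows "omega_pow (a + b) = omega_pow a * omega_pow b"
proof -
  let ?p = "int CARD('p)"
  let ?x = "to_int_mod_ring a + to_int_mod_ring b"
  have e: "?x mod ?p = ?x - ?p * (?x div ?p)" by (simp add: minus_div_mult_eq_mod[symmetric] algebra_simps)
  have "omega_pow (a + b) = cis (2 * pi * real_of_int (?x mod ?p) / real CARD('p))"
    unfolding omega_pow_def to_int_mod_ring_add by simp
  also have "\<dots> = cis (2 * pi * real_of_int ?x / real CARD('p) - 2 * pi * real_of_int (?x div ?p))"
    unfolding e by (simp add: field_simps)
  also have "\<dots> = cis (2 * pi * real_of_int ?x / real CARD('p))"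
    by (simp add: cis_divide[symmetric])
  also have "\<dots> = omega_pow a * omega_pow b"
    unfolding omega_pow_def cis_mult by (simp add: field_simps)
  finally show ?thesis .
qed

lemma omega_pow_zero[simp]: "omega_pow (0::'p::prime_card mod_ring) = 1"
  unfolding omega_pow_def by simp

lemma norm_omega_pow[simp]: "norm (omega_pow (a::'p::prime_card mod_ring)) = 1"
  unfolding omega_pow_def by simp

lemma omega_pow_sum:
  fixes f :: "'b \<Rightarrow> 'p::prime_card mod_ring"
  shows "omega_pow (sum f S) = (\<Prod>i\<in>S. omega_pow (f i))"
  by (induction S rule: infinite_finite_induct) (auto simp: omega_pow_add)

lemma omega_pow_minus: "omega_pow (- a) = cnj (omega_pow (a::'p::prime_card mod_ring))"
proof -
  have "omega_pow (-a) * omega_pow a = 1" by (simp flip: omega_pow_add)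
  moreover have "cnj (omega_pow a) * omega_pow a = 1"
    using complex_norm_square[of "omega_pow a"] by (simp add: mult.commute)
  moreover have "omega_pow a \<noteq> 0" using norm_omega_pow[of a] by (metis norm_zero zero_neq_one)
  ultimately show ?thesis by (metis mult_right_cancel)
qed

lemma cos_le_cos_2pi_p:
  fixes k p :: int
  assumes "1 \<le> k" "k \<le> p - 1"
  shows "cos (2 * pi * k / p) \<le> cos (2 * pi / p)"
proof (cases "2 * k \<le> p")
  case True
  show ?thesis
    apply (rule cos_monotone_0_pi_le)
    using assms True by (auto simp: field_simps)
next
  case False
  have kp: "2 * pi * (1 + k) \<le> 2 * pi * p"
    by (intro mult_left_mono) (use assms in auto)
  have "cos (2 * pi * k / p) = cos (2 * pi - 2 * pi * (p - k) / p)"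
    using assms by (simp add: field_simps)
  also have "\<dots> = cos (2 * pi * (p - k) / p)" by (rule cos_2pi_minus)
  also have "\<dots> \<le> cos (2 * pi / p)"
    apply (rule cos_monotone_0_pi_le)
    using assms False kp by (auto simp: field_simps)
  finally show ?thesis .
qed

lemma Re_omega_pow_le:
  fixes u :: "'p::prime_card mod_ring"
  assumes "u \<noteq> 0"
  shows "Re (omega_pow u) \<le> cos (2 * pi / real CARD('p))"
proof -
  have r: "to_int_mod_ring u \<in> {0..<int CARD('p)}" using range_to_int_mod_ring by blast
  have nz: "to_int_mod_ring u \<noteq> 0" using assms
    by (metis to_int_mod_ring_hom.hom_zero to_int_mod_ring_hom.injectivity)
  have r1: "0 \<le> to_int_mod_ring u" "to_int_mod_ring u < int CARD('p)" using r by auto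
  have k: "1 \<le> to_int_mod_ring u" "to_int_mod_ring u \<le> int CARD('p) - 1" using r1 nz by smt+
  have "Re (omega_pow u) = cos (2 * pi * real_of_int (to_int_mod_ring u) / real_of_int (int CARD('p)))"
    unfolding omega_pow_def by simp
  also have "\<dots> \<le> cos (2 * pi / real_of_int (int CARD('p)))"
    by (rule cos_le_cos_2pi_p[OF k])
  finally show ?thesis by simp
qed


definition fhat :: "'p::prime_card mod_ring pmf \<Rightarrow> 'p mod_ring \<Rightarrow> complex" where
  "fhat D s = (\<Sum>v\<in>UNIV. complex_of_real (pmf D v) * omega_pow (s * v))"

lemma sum_pmf_UNIV: "(\<Sum>v\<in>UNIV. pmf (D::'a::finite pmf) v) = 1"
  by (rule sum_pmf_eq_1) auto

lemma norm_fhat_le1: "norm (fhat D s) \<le> 1"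
proof -
  have "norm (fhat D s) \<le> (\<Sum>v\<in>UNIV. norm (complex_of_real (pmf D v) * omega_pow (s * v)))"
    unfolding fhat_def by (rule norm_sum)
  also have "\<dots> = (\<Sum>v\<in>UNIV. pmf D v)" by (simp add: norm_mult)
  finally show ?thesis by (simp add: sum_pmf_UNIV)
qed

lemma norm_fhat_sq:
  fixes D :: "'p::prime_card mod_ring pmf"
  assumes s: "s \<noteq> 0" and c: "0 \<le> c" and D: "\<And>x. pmf D x \<le> 1 - c"
  shows "(norm (fhat D s))\<^sup>2 \<le> 1 - c * (1 - cos (2 * pi / real CARD('p)))"
proof -
  define \<theta> where "\<theta> = cos (2 * pi / real CARD('p))"
  have th1: "\<theta> \<le> 1" unfolding \<theta>_def by simp
  let ?z = "fhat D s"
  have "complex_of_real ((norm ?z)\<^sup>2) = ?z * cnj ?z"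
    by (rule complex_norm_square)
  also have "\<dots> = (\<Sum>v\<in>UNIV. \<Sum>w\<in>UNIV. complex_of_real (pmf D v * pmf D w) * omega_pow (s * (v - w)))"
    unfolding fhat_def cnj_sum sum_product
  proof (intro sum.cong refl)
    fix v w :: "'p mod_ring"
    have "omega_pow (s * v) * cnj (omega_pow (s * w)) = omega_pow (s * v + - (s * w))"
      by (simp only: omega_pow_add omega_pow_minus)
    also have "s * v + - (s * w) = s * (v - w)" by (simp add: algebra_simps)
    finally have om: "omega_pow (s * v) * cnj (omega_pow (s * w)) = omega_pow (s * (v - w))" .
    show "complex_of_real (pmf D v) * omega_pow (s * v) * cnj (complex_of_real (pmf D w) * omega_pow (s * w))
        = complex_of_real (pmf D v * pmf D w) * omega_pow (s * (v - w))"
      by (simp only: complex_cnj_mult complex_cnj_complex_of_real of_real_mult om[symmetric] mult_ac)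
  qed
  finally have eqc: "complex_of_real ((norm ?z)\<^sup>2) = (\<Sum>v\<in>UNIV. \<Sum>w\<in>UNIV. complex_of_real (pmf D v * pmf D w) * omega_pow (s * (v - w)))" .
  have eq: "(norm ?z)\<^sup>2 = (\<Sum>v\<in>UNIV. \<Sum>w\<in>UNIV. pmf D v * pmf D w * Re (omega_pow (s * (v - w))))"
  proof -
    have "(norm ?z)\<^sup>2 = Re (complex_of_real ((norm ?z)\<^sup>2))" by (simp only: Re_complex_of_real)
    also have "\<dots> = Re (\<Sum>v\<in>UNIV. \<Sum>w\<in>UNIV. complex_of_real (pmf D v * pmf D w) * omega_pow (s * (v - w)))"
      by (simp only: eqc)
    also have "\<dots> = (\<Sum>v\<in>UNIV. \<Sum>w\<in>UNIV. pmf D v * pmf D w * Re (omega_pow (s * (v - w))))"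
      by (simp only: Re_sum) simp
    finally show ?thesis .
  qed
  have le: "Re (omega_pow (s * (v - w))) \<le> \<theta> + (1 - \<theta>) * (if v = w then 1 else 0)" for v w
  proof (cases "v = w")
    case True then show ?thesis by simp
  next
    case False
    then have "s * (v - w) \<noteq> 0" using s by simp
    then show ?thesis using Re_omega_pow_le[of "s * (v - w)"] False unfolding \<theta>_def by simp
  qed
  have "(norm ?z)\<^sup>2 \<le> (\<Sum>v\<in>UNIV. \<Sum>w\<in>UNIV. pmf D v * pmf D w * (\<theta> + (1 - \<theta>) * (if v = w then 1 else 0)))"
    unfolding eq by (intro sum_mono mult_left_mono le) auto
  also have "\<dots> = \<theta> * ((\<Sum>v\<in>UNIV. pmf D v) * (\<Sum>w\<in>UNIV. pmf D w)) + (1 - \<theta>) * (\<Sum>v\<in>UNIV. pmf D v * pmf D v)"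
  proof -
    have inner: "(\<Sum>w\<in>UNIV. pmf D v * pmf D w * (\<theta> + (1 - \<theta>) * (if v = w then 1 else 0)))
       = \<theta> * (pmf D v * (\<Sum>w\<in>UNIV. pmf D w)) + (1 - \<theta>) * (pmf D v * pmf D v)" for v
    proof -
      have "(\<Sum>w\<in>UNIV. pmf D v * pmf D w * (\<theta> + (1 - \<theta>) * (if v = w then 1 else 0)))
         = (\<Sum>w\<in>UNIV. \<theta> * (pmf D v * pmf D w) + (1 - \<theta>) * (if w = v then pmf D v * pmf D v else 0))"
        by (intro sum.cong refl) (auto simp: algebra_simps)
      also have "\<dots> = \<theta> * (\<Sum>w\<in>UNIV. pmf D v * pmf D w) + (1 - \<theta>) * (pmf D v * pmf D v)"
        by (simp add: sum.distrib sum_distrib_left[symmetric])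
      finally show ?thesis by (simp add: sum_distrib_left)
    qed
    show ?thesis unfolding inner
      by (simp add: sum.distrib sum_distrib_left[symmetric] sum_distrib_right[symmetric] mult.assoc)
  qed
  also have "\<dots> = \<theta> + (1 - \<theta>) * (\<Sum>v\<in>UNIV. pmf D v * pmf D v)" by (simp add: sum_pmf_UNIV)
  also have "\<dots> \<le> \<theta> + (1 - \<theta>) * (\<Sum>v\<in>UNIV. pmf D v * (1 - c))"
    using th1 by (intro add_left_mono mult_left_mono sum_mono) (auto intro: D)
  also have "\<dots> = \<theta> + (1 - \<theta>) * (1 - c)" by (simp add: sum_distrib_right[symmetric] sum_pmf_UNIV)
  also have "\<dots> = 1 - c * (1 - \<theta>)" by (simp add: algebra_simps)
  finally show ?thesis unfolding \<theta>_def .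
qed

lemma norm_fhat_exp:
  fixes D :: "'p::prime_card mod_ring pmf"
  assumes s: "s \<noteq> 0" and c: "0 \<le> c" and D: "\<And>x. pmf D x \<le> 1 - c"
  shows "norm (fhat D s) \<le> exp (- (c * (1 - cos (2 * pi / real CARD('p)))) / 2)"
proof -
  let ?x = "c * (1 - cos (2 * pi / real CARD('p)))"
  have "(norm (fhat D s))\<^sup>2 \<le> 1 - ?x" by (rule norm_fhat_sq[OF assms])
  also have "\<dots> \<le> exp (- ?x)" using exp_ge_add_one_self[of "- ?x"] by simp
  also have "\<dots> = (exp (- ?x / 2))\<^sup>2" by (simp flip: exp_double)
  finally show ?thesis by (rule power2_le_imp_le) simp
qed


definition indep_on :: "'i set \<Rightarrow> 'k set \<Rightarrow> ('k \<Rightarrow> 'i \<Rightarrow> 'a::field) \<Rightarrow> bool" where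
  "indep_on N K f \<longleftrightarrow> (\<forall>a. (\<forall>i\<in>N. (\<Sum>k\<in>K. a k * f k i) = 0) \<longrightarrow> (\<forall>k\<in>K. a k = 0))"

lemma sum_PiE_insert:
  assumes "finite S" "i \<notin> S"
  shows "(\<Sum>x\<in>PiE (insert i S) (\<lambda>_. (UNIV::'b::finite set)). F x)
       = (\<Sum>g\<in>PiE S (\<lambda>_. UNIV). \<Sum>y\<in>UNIV. F (g(i := y)))"
proof -
  have "(\<Sum>x\<in>PiE (insert i S) (\<lambda>_. (UNIV::'b set)). F x)
      = (\<Sum>x\<in>(\<lambda>(y, g). g(i := y)) ` (UNIV \<times> PiE S (\<lambda>_. (UNIV::'b set))). F x)"
    by (simp add: PiE_insert_eq)
  also have "\<dots> = (\<Sum>(y, g)\<in>UNIV \<times> PiE S (\<lambda>_. (UNIV::'b set)). F (g(i := y)))"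
    by (subst sum.reindex) (use inj_combinator[OF assms(2), of "\<lambda>_. UNIV"] in \<open>auto simp: case_prod_unfold\<close>)
  also have "\<dots> = (\<Sum>y\<in>UNIV. \<Sum>g\<in>PiE S (\<lambda>_. (UNIV::'b set)). F (g(i := y)))"
    by (rule sum.cartesian_product[symmetric])
  also have "\<dots> = (\<Sum>g\<in>PiE S (\<lambda>_. UNIV). \<Sum>y\<in>UNIV. F (g(i := y)))"
    by (rule sum.swap)
  finally show ?thesis .
qed

lemma sum_prod_pmf_PiE:
  assumes "finite N"
  shows "(\<Sum>x\<in>PiE N (\<lambda>_. (UNIV::'b::finite set)). \<Prod>i\<in>N. pmf D (x i)) = 1"
proof -
  have "(\<Sum>x\<in>PiE N (\<lambda>_. (UNIV::'b set)). \<Prod>i\<in>N. pmf D (x i)) = (\<Prod>i\<in>N. \<Sum>v\<in>UNIV. pmf D v)"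
    by (rule prod_sum_PiE[symmetric]) (use assms in auto)
  also have "\<dots> = 1" by (simp add: sum_pmf_eq_1)
  finally show ?thesis .
qed

lemma prob_bound:
  fixes f :: "'k \<Rightarrow> 'i \<Rightarrow> 'a::{field,finite}" and D :: "'a pmf"
  assumes "finite N" "finite K" "indep_on N K f" "\<And>v. pmf D v \<le> q"
  shows "(\<Sum>x\<in>PiE N (\<lambda>_. UNIV). if (\<forall>k\<in>K. (\<Sum>i\<in>N. f k i * x i) = z k) then (\<Prod>i\<in>N. pmf D (x i)) else 0)
         \<le> q ^ card K"
  using assms
proof (induction "card K" arbitrary: K f z N)
  case 0
  then have K: "K = {}" by simp
  show ?case unfolding K using sum_prod_pmf_PiE[OF \<open>finite N\<close>, of D] by simp
next
  case (Suc m)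
  have q0: "0 \<le> q" using Suc.prems(4)[of undefined] pmf_nonneg[of D undefined] by linarith
  obtain k0 where k0: "k0 \<in> K" using Suc.hyps(2) by fastforce
  have "\<exists>i0\<in>N. f k0 i0 \<noteq> 0"
  proof (rule ccontr)
    assume "\<not> ?thesis"
    then have z: "\<forall>i\<in>N. f k0 i = 0" by auto
    define a where "a k = (if k = k0 then 1 else (0::'a))" for k
    have "(\<Sum>k\<in>K. a k * f k i) = (\<Sum>k\<in>K. if k = k0 then f k i else 0)" for i
      by (intro sum.cong) (auto simp: a_def)
    then have "\<forall>i\<in>N. (\<Sum>k\<in>K. a k * f k i) = 0"
      using z k0 Suc.prems(2) by (simp add: sum.delta)
    then have "a k0 = 0" using Suc.prems(3) k0 unfolding indep_on_def by blast
    then show False unfolding a_def by simp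
  qed
  then obtain i0 where i0: "i0 \<in> N" "f k0 i0 \<noteq> 0" by blast
  define c where "c = f k0 i0"
  have c0: "c \<noteq> 0" using i0 c_def by simp
  define K' where "K' = K - {k0}"
  define N' where "N' = N - {i0}"
  define g where "g k i = f k i - (f k i0 / c) * f k0 i" for k i
  define z' where "z' k = z k - (f k i0 / c) * z k0" for k
  define \<phi> where "\<phi> x = (z k0 - (\<Sum>i\<in>N'. f k0 i * x i)) / c" for x :: "'i \<Rightarrow> 'a"
  have finN': "finite N'" using Suc.prems(1) N'_def by simp
  have finK': "finite K'" using Suc.prems(2) K'_def by simp
  have cardK': "m = card K'" using Suc.hyps(2) k0 K'_def Suc.prems(2) by simp
  have Nins: "N = insert i0 N'" "i0 \<notin> N'" using i0 N'_def by auto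
  have Kins: "K = insert k0 K'" "k0 \<notin> K'" using k0 K'_def by auto
  have gi0: "g k i0 = 0" for k unfolding g_def c_def using c0 c_def by simp
  have sumN: "(\<Sum>i\<in>N. h i) = h i0 + (\<Sum>i\<in>N'. h i)" for h :: "'i \<Rightarrow> 'a"
    unfolding Nins(1) using Nins(2) finN' by simp
  have sumK: "(\<Sum>k\<in>K. h k) = h k0 + (\<Sum>k\<in>K'. h k)" for h :: "'k \<Rightarrow> 'a"
    unfolding Kins(1) using Kins(2) finK' by simp
  have indep': "indep_on N' K' g"
    unfolding indep_on_def
  proof (intro allI impI)
    fix a assume H: "\<forall>i\<in>N'. (\<Sum>k\<in>K'. a k * g k i) = 0"
    have H2: "(\<Sum>k\<in>K'. a k * g k i) = 0" if "i \<in> N" for i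
      using H that gi0 Nins by (cases "i = i0") auto
    define a' where "a' k = (if k = k0 then - (\<Sum>k'\<in>K'. a k' * (f k' i0 / c)) else a k)" for k
    have "(\<Sum>k\<in>K. a' k * f k i) = 0" if "i \<in> N" for i
    proof -
      have "(\<Sum>k\<in>K. a' k * f k i) = - (\<Sum>k'\<in>K'. a k' * (f k' i0 / c)) * f k0 i + (\<Sum>k\<in>K'. a k * f k i)"
        unfolding sumK a'_def using Kins(2) by (auto intro!: sum.cong)
      also have "\<dots> = (\<Sum>k\<in>K'. a k * g k i)"
        unfolding g_def by (simp add: sum_distrib_right sum_distrib_left algebra_simps sum_subtractf)
      also have "\<dots> = 0" using H2 that .
      finally show ?thesis .
    qed
    then have a0: "\<forall>k\<in>K. a' k = 0" using Suc.prems(3) unfolding indep_on_def by blast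
    show "\<forall>k\<in>K'. a k = 0"
    proof
      fix k assume k: "k \<in> K'"
      then have kk: "k \<in> K" "k \<noteq> k0" using Kins by auto
      then have "a' k = 0" using a0 by blast
      then show "a k = 0" using kk(2) unfolding a'_def by simp
    qed
  qed
  have IH: "(\<Sum>x\<in>PiE N' (\<lambda>_. UNIV). if (\<forall>k\<in>K'. (\<Sum>i\<in>N'. g k i * x i) = z' k) then (\<Prod>i\<in>N'. pmf D (x i)) else 0)
         \<le> q ^ m"
    using Suc.hyps(1)[OF cardK' finN' finK' indep' Suc.prems(4)] by (simp add: cardK')
  define E' where "E' x \<longleftrightarrow> (\<forall>k\<in>K'. (\<Sum>i\<in>N'. g k i * x i) = z' k)" for x :: "'i \<Rightarrow> 'a"
  have impl: "E' x \<and> x i0 = \<phi> x" if E: "\<forall>k\<in>K. (\<Sum>i\<in>N. f k i * x i) = z k" for x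
  proof
    have e0: "c * x i0 + (\<Sum>i\<in>N'. f k0 i * x i) = z k0" using E k0 sumN[of "\<lambda>i. f k0 i * x i"] c_def by simp
    then show "x i0 = \<phi> x" unfolding \<phi>_def using c0 by (simp add: field_simps)
    show "E' x" unfolding E'_def
    proof
      fix k assume k: "k \<in> K'"
      have "(\<Sum>i\<in>N'. g k i * x i) = (\<Sum>i\<in>N. g k i * x i)" using sumN[of "\<lambda>i. g k i * x i"] gi0 by simp
      also have "\<dots> = (\<Sum>i\<in>N. f k i * x i) - (f k i0 / c) * (\<Sum>i\<in>N. f k0 i * x i)"
        unfolding g_def by (simp add: algebra_simps sum_subtractf sum_distrib_left)
      also have "\<dots> = z' k" using E k k0 Kins unfolding z'_def by auto
      finally show "(\<Sum>i\<in>N'. g k i * x i) = z' k" .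
    qed
  qed
  let ?P = "\<lambda>x. \<Prod>i\<in>N. pmf D (x i)"
  have "(\<Sum>x\<in>PiE N (\<lambda>_. UNIV). if (\<forall>k\<in>K. (\<Sum>i\<in>N. f k i * x i) = z k) then ?P x else 0)
      \<le> (\<Sum>x\<in>PiE N (\<lambda>_. UNIV). if E' x \<and> x i0 = \<phi> x then ?P x else 0)"
    using impl by (intro sum_mono) (auto simp: prod_nonneg)
  also have "\<dots> = (\<Sum>x\<in>PiE N' (\<lambda>_. UNIV). \<Sum>y\<in>UNIV. if E' (x(i0 := y)) \<and> y = \<phi> (x(i0 := y)) then ?P (x(i0 := y)) else 0)"
    unfolding Nins(1) by (subst sum_PiE_insert[OF finN' Nins(2)]) simp
  also have "\<dots> = (\<Sum>x\<in>PiE N' (\<lambda>_. UNIV). if E' x then pmf D (\<phi> x) * (\<Prod>i\<in>N'. pmf D (x i)) else 0)"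
  proof (intro sum.cong refl)
    fix x :: "'i \<Rightarrow> 'a" assume x: "x \<in> PiE N' (\<lambda>_. UNIV)"
    have upd: "(x(i0 := y)) i = x i" if "i \<in> N'" for i and y :: 'a using that Nins(2) by auto
    have E'u: "E' (x(i0 := y)) = E' x" for y :: 'a unfolding E'_def using upd by (simp cong: sum.cong)
    have \<phi>u: "\<phi> (x(i0 := y)) = \<phi> x" for y :: 'a unfolding \<phi>_def using upd by (simp cong: sum.cong)
    have Pu: "?P (x(i0 := y)) = pmf D y * (\<Prod>i\<in>N'. pmf D (x i))" for y :: 'a
      unfolding Nins(1) using Nins(2) finN' upd by (simp cong: prod.cong)
    show "(\<Sum>y\<in>UNIV. if E' (x(i0 := y)) \<and> y = \<phi> (x(i0 := y)) then ?P (x(i0 := y)) else 0)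
        = (if E' x then pmf D (\<phi> x) * (\<Prod>i\<in>N'. pmf D (x i)) else 0)"
      unfolding E'u \<phi>u Pu by (simp add: sum.delta' conj_commute if_distrib cong: if_cong)
  qed
  also have "\<dots> \<le> (\<Sum>x\<in>PiE N' (\<lambda>_. UNIV). q * (if E' x then (\<Prod>i\<in>N'. pmf D (x i)) else 0))"
    by (intro sum_mono) (auto intro!: mult_right_mono Suc.prems(4) prod_nonneg)
  also have "\<dots> = q * (\<Sum>x\<in>PiE N' (\<lambda>_. UNIV). if E' x then (\<Prod>i\<in>N'. pmf D (x i)) else 0)"
    by (simp add: sum_distrib_left)
  also have "\<dots> \<le> q * q ^ m" using IH unfolding E'_def by (intro mult_left_mono q0) auto
  also have "\<dots> = q ^ card K" using Suc.hyps(2)[symmetric] by simp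
  finally show ?case .
qed


lemma cos_le_taylor4: "cos (x::real) \<le> 1 - x^2/2 + x^4/24"
proof -
  obtain t where t: "cos x = (\<Sum>m<4. cos_coeff m * x ^ m) + cos (t + 1/2 * real 4 * pi) / fact 4 * x ^ 4"
    using Maclaurin_cos_expansion[of x 4] by blast
  have s0: "(\<Sum>m<4. cos_coeff m * x ^ m) = cos_coeff 0 * x^0 + cos_coeff 1 * x^1 + cos_coeff 2 * x^2 + cos_coeff 3 * x^3"
    by (simp add: numeral_eq_Suc)
  have c1: "cos_coeff 1 = 0" "cos_coeff 3 = 0" "cos_coeff 2 = -1/2"
    by (simp_all add: cos_coeff_def)
  have s: "(\<Sum>m<4. cos_coeff m * x ^ m) = 1 - x^2/2"
    unfolding s0 c1 by simp
  have f: "(fact 4 :: real) = 24" by (simp add: numeral_eq_Suc)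
  have c: "cos (t + 1/2 * real 4 * pi) \<le> 1" by simp
  have x4: "0 \<le> x^4" by simp
  have "cos (t + 1/2 * real 4 * pi) / fact 4 * x ^ 4 \<le> 1 / 24 * x^4"
    unfolding f using c x4 by (intro mult_right_mono divide_right_mono) auto
  then show ?thesis using t s by simp
qed

lemma pi_sq_le: "pi^2 \<le> 10"
proof -
  have "pi \<le> 63/20" using pi_approx(2) by simp
  then have "pi^2 \<le> (63/20)^2" by (intro power_mono) auto
  moreover have "(63/20::real)^2 \<le> 10" by (simp add: power2_eq_square)
  ultimately show ?thesis by linarith
qed

lemma sigma_p3: "(1 - cos (2 * pi / 3)) * 3^2 / pi^2 \<ge> 4/3"
proof -
  have "cos (2 * pi / 3) = -1/2" by (rule cos_120)
  then have e: "(1 - cos (2 * pi / 3)) * 3^2 / pi^2 = 27 / (2 * pi^2)" by simp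
  have "pi^2 > 0" by simp
  then show ?thesis unfolding e using pi_sq_le by (simp add: field_simps)
qed

lemma sigma_p4:
  fixes p :: real assumes p: "p \<ge> 4"
  shows "(1 - cos (2 * pi / p)) * p^2 / pi^2 \<ge> 19/12"
proof -
  define x where "x = 2 * pi / p"
  have pp: "p > 0" using p by simp
  have "1 - cos x \<ge> x^2/2 - x^4/24" using cos_le_taylor4[of x] by simp
  then have "(1 - cos x) * p^2 / pi^2 \<ge> (x^2/2 - x^4/24) * p^2 / pi^2"
    by (intro divide_right_mono mult_right_mono) auto
  moreover have "(x^2/2 - x^4/24) * p^2 / pi^2 = 2 - 2 * pi^2 / (3 * p^2)"
    unfolding x_def using pp by (simp add: field_simps power2_eq_square power4_eq_xxxx)
  moreover have "2 * pi^2 / (3 * p^2) \<le> 5/12"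
  proof -
    have "4 * 4 \<le> p * p" using p by (intro mult_mono) auto
    then have "p^2 \<ge> 16" by (simp add: power2_eq_square)
    then have "2 * pi^2 \<le> 5/12 * (3 * p^2)" using pi_sq_le by linarith
    moreover have "0 < 3 * p^2" using pp by simp
    ultimately show ?thesis by (simp only: pos_divide_le_eq)
  qed
  ultimately show ?thesis unfolding x_def by linarith
qed

lemma ln_tangent4: "0 < y \<Longrightarrow> ln (y::real) \<le> y / 4 + ln 4 - 1"
proof -
  assume y: "0 < y"
  have "ln (y / 4) \<le> y / 4 - 1" using y by (intro ln_le_minus_one) auto
  moreover have "ln (y / 4) = ln y - ln 4" using y by (simp add: ln_div)
  ultimately show ?thesis by simp
qed

lemma key_ineq:
  fixes p c1 c2 :: real
  assumes p: "p = 3 \<or> p \<ge> 4"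
    and c1: "0 < c1" "c1 \<le> 1/2" and c2: "0 < c2" "c2 \<le> 1/2"
  defines "s \<equiv> 1 - cos (2*pi/p)"
  defines "A \<equiv> c2 * s / 2"
  defines "M \<equiv> ln (2 * exp 1 * p / c1)"
  defines "\<sigma> \<equiv> s * p^2 / pi^2"
  shows "ln ((p - 1) / (c1 / (\<sigma> * M))) + 1 + A \<le> \<sigma> * M"
    and "\<sigma> \<ge> 4/3" and "M \<ge> 1" and "0 < A" and "A \<le> 1/2"
proof -
  have pp: "p \<ge> 3" using p by auto
  show sig: "\<sigma> \<ge> 4/3"
  proof (cases "p = 3")
    case True then show ?thesis using sigma_p3 unfolding \<sigma>_def s_def by simp
  next
    case False then have "p \<ge> 4" using p by auto
    then have "\<sigma> \<ge> 19/12" using sigma_p4[of p] unfolding \<sigma>_def s_def by simp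
    then show ?thesis by simp
  qed
  have s_le: "s \<le> 2" unfolding s_def using cos_ge_minus_one[of "2*pi/p"] by linarith
  have s_eq: "s = \<sigma> * pi^2 / p^2" unfolding \<sigma>_def using pp by simp
  have s_pos: "s > 0" unfolding s_eq using sig pp by (intro divide_pos_pos mult_pos_pos) auto
  show A_pos: "0 < A" unfolding A_def using s_pos c2 by simp
  have "c2 * s \<le> (1/2) * 2" using c2 s_le s_pos by (intro mult_mono) auto
  then show A_le: "A \<le> 1/2" unfolding A_def by simp
  define L where "L = ln (2 * p / c1)"
  have M_eq: "M = 1 + L"
  proof -
    have "M = ln (exp 1 * (2 * p / c1))" unfolding M_def by (rule arg_cong[where f=ln]) (simp add: field_simps)
    also have "\<dots> = 1 + L" unfolding L_def using c1 pp by (subst ln_mult) auto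
    finally show ?thesis .
  qed
  have q_ge: "2 * p / c1 \<ge> 4 * p" using c1 pp by (simp add: field_simps)
  have L_pos: "L \<ge> 0" unfolding L_def using q_ge pp by simp
  show M1: "M \<ge> 1" using M_eq L_pos by simp
  have Mpos: "M > 0" using M1 by simp
  have sM: "\<sigma> * M > 0" using sig Mpos by simp
  have eqn: "(p - 1) / (c1 / (\<sigma> * M)) = ((p - 1) / (2 * p)) * (2 * p / c1) * (\<sigma> * M)"
    using c1 pp sM by (simp add: field_simps)
  have pa: "0 < (p - 1) / (2 * p)" using pp by simp
  have pb: "0 < 2 * p / c1" using pp c1 by simp
  have lnsplit: "ln ((p - 1) / (c1 / (\<sigma> * M))) = ln ((p - 1) / (2 * p)) + L + ln (\<sigma> * M)"
  proof -
    have "ln ((p - 1) / (c1 / (\<sigma> * M))) = ln (((p - 1) / (2 * p)) * (2 * p / c1) * (\<sigma> * M))"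
      by (simp only: eqn)
    also have "\<dots> = ln (((p - 1) / (2 * p)) * (2 * p / c1)) + ln (\<sigma> * M)"
      by (rule ln_mult_pos) (use mult_pos_pos[OF pa pb] sM in auto)
    also have "ln (((p - 1) / (2 * p)) * (2 * p / c1)) = ln ((p - 1) / (2 * p)) + L"
      unfolding L_def by (rule ln_mult_pos) (use pa pb in auto)
    finally show ?thesis .
  qed
  have lt: "ln (\<sigma> * M) \<le> \<sigma> * M / 4 + ln 4 - 1" by (rule ln_tangent4[OF sM])
  show "ln ((p - 1) / (c1 / (\<sigma> * M))) + 1 + A \<le> \<sigma> * M"
  proof (cases "p = 3")
    case True
    have s3: "s = 3/2" unfolding s_def True using cos_120 by simp
    have A3: "A \<le> 3/8" unfolding A_def s3 using c2 by simp
    have l3: "ln ((p - 1) / (2 * p)) = - ln 3" unfolding True by (simp add: ln_div)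
    have l43: "ln 4 - ln 3 \<le> (1/3::real)"
    proof -
      have "ln (4/3::real) \<le> 4/3 - 1" by (rule ln_le_minus_one) auto
      then show ?thesis by (simp add: ln_div)
    qed
    have "\<sigma> * M / 4 + M \<le> \<sigma> * M"
    proof -
      have "M \<le> (3/4 * \<sigma>) * M" using sig Mpos by (intro mult_right_mono[of 1 _ M, simplified]) auto
      then show ?thesis by simp
    qed
    then show ?thesis unfolding lnsplit l3 using lt l43 A3 M_eq by linarith
  next
    case False
    then have p4: "p \<ge> 4" using p by auto
    have sig4: "\<sigma> \<ge> 19/12" using sigma_p4[OF p4] unfolding \<sigma>_def s_def .
    have l2: "ln ((p - 1) / (2 * p)) \<le> - ln 2"
    proof -
      have "ln ((p - 1) / (2 * p)) \<le> ln (1/2)" using p4 by (subst ln_le_cancel_iff) (auto simp: field_simps)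
      then show ?thesis by (simp add: ln_div)
    qed
    have ln2: "ln 2 < (1::real)" by (rule ln_2_less_1)
    have ln4: "ln 4 = 2 * ln (2::real)"
      using ln_realpow[of 2 2] by simp
    have L2: "L \<ge> 2"
    proof -
      have "exp 2 = exp 1 * exp (1::real)" by (simp flip: exp_add)
      also have "\<dots> \<le> 3 * 3" using exp_le by (intro mult_mono) auto
      also have "\<dots> \<le> 2 * p / c1" using q_ge p4 by simp
      finally have "exp 2 \<le> 2 * p / c1" .
      then have "ln (exp 2) \<le> L" unfolding L_def using c1 pp by (subst ln_le_cancel_iff) auto
      then show ?thesis by simp
    qed
    have M3: "M \<ge> 3" using M_eq L2 by simp
    have "(3/16) * 3 \<le> (3/4 * \<sigma> - 1) * M" using sig4 M3 by (intro mult_mono) auto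
    moreover have "(3/4 * \<sigma> - 1) * M = 3/4 * (\<sigma> * M) - M" by (simp add: algebra_simps)
    ultimately show ?thesis unfolding lnsplit using lt l2 ln2 ln4 A_le M_eq by linarith
  qed
qed

lemma final_ineq:
  fixes p c1 c2 \<epsilon> :: real and r :: nat
  assumes p: "p = 3 \<or> p \<ge> 4"
    and c1: "0 < c1" "c1 \<le> 1/2" and c2: "0 < c2" "c2 \<le> 1/2" and eps: "\<epsilon> > 0"
    and bound: "\<And>\<kappa> la. 0 \<le> \<kappa> \<Longrightarrow> 0 < la \<Longrightarrow> la \<le> 1 \<Longrightarrow>
       \<epsilon> \<le> exp (- (c2 * (1 - cos (2*pi/p)) / 2) * \<kappa>) + la powr (-\<kappa>) * (1 - c1)^r * (1 + (p - 1) * la)^r"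
  shows "real r \<le> 2 / (c1 * c2 * pi\<^sup>2) * p\<^sup>2 * ln (2 * exp 1 * p / c1) * ln (3 / \<epsilon>)"
proof -
  define s where "s = 1 - cos (2*pi/p)"
  define A where "A = c2 * s / 2"
  define M where "M = ln (2 * exp 1 * p / c1)"
  define \<sigma> where "\<sigma> = s * p^2 / pi^2"
  define \<beta> where "\<beta> = c1 / (\<sigma> * M)"
  note K = key_ineq[OF p c1 c2, folded s_def, folded A_def M_def \<sigma>_def, folded \<beta>_def]
  have pp: "p \<ge> 3" using p by auto
  have sM: "\<sigma> * M > 0" using K(2,3) by simp
  have bpos: "\<beta> > 0" unfolding \<beta>_def using sM c1 by simp
  have b1: "\<beta> \<le> 1"
  proof -
    have "\<sigma> * M \<ge> (4/3) * 1" using K(2,3) by (intro mult_mono) auto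
    then have "c1 \<le> \<sigma> * M" using c1 by simp
    then show ?thesis unfolding \<beta>_def using sM by simp
  qed
  define la where "la = \<beta> / (p - 1)"
  have lpos: "la > 0" unfolding la_def using bpos pp by simp
  have l1: "la \<le> 1" unfolding la_def using b1 pp by simp
  define \<kappa> where "\<kappa> = \<beta> * real r"
  have kpos: "\<kappa> \<ge> 0" unfolding \<kappa>_def using bpos by simp
  have b: "\<epsilon> \<le> exp (- A * \<kappa>) + la powr (-\<kappa>) * (1 - c1)^r * (1 + (p - 1) * la)^r"
    using bound[OF kpos lpos l1] unfolding A_def s_def .
  define Q where "Q = la powr (-\<beta>) * (1 - c1) * (1 + \<beta>)"
  have Qpos: "Q > 0" unfolding Q_def using lpos c1 bpos by simp
  have lnQ: "ln Q = \<beta> * ln ((p - 1) / \<beta>) + ln (1 - c1) + ln (1 + \<beta>)"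
  proof -
    have "ln Q = ln (la powr (-\<beta>)) + ln (1 - c1) + ln (1 + \<beta>)"
      unfolding Q_def using lpos c1 bpos by (simp add: ln_mult)
    moreover have "ln (la powr (-\<beta>)) = - \<beta> * ln la" using lpos by (simp add: ln_powr)
    moreover have "ln la = ln \<beta> - ln (p - 1)" unfolding la_def using bpos pp by (simp add: ln_div)
    moreover have e3: "ln ((p - 1) / \<beta>) = ln (p - 1) - ln \<beta>" using bpos pp by (simp add: ln_div)
    ultimately have e4: "ln Q = - \<beta> * (ln \<beta> - ln (p - 1)) + ln (1 - c1) + ln (1 + \<beta>)" by simp
    have e5: "\<beta> * ln ((p - 1) / \<beta>) = - \<beta> * (ln \<beta> - ln (p - 1))" unfolding e3 by (simp add: algebra_simps)
    show ?thesis unfolding e4 e5 ..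
  qed
  have "ln (1 - c1) \<le> - c1" using ln_le_minus_one[of "1 - c1"] c1 by simp
  moreover have "ln (1 + \<beta>) \<le> \<beta>" using ln_le_minus_one[of "1 + \<beta>"] bpos by simp
  moreover have "\<beta> * (ln ((p - 1) / \<beta>) + 1 + A) \<le> \<beta> * (\<sigma> * M)"
    using K(1) bpos unfolding \<beta>_def[symmetric] by (intro mult_left_mono) auto
  moreover have "\<beta> * (\<sigma> * M) = c1"
  proof -
    have "\<sigma> \<noteq> 0" "M \<noteq> 0" using K(2,3) by auto
    then show ?thesis unfolding \<beta>_def by simp
  qed
  ultimately have "ln Q \<le> - A * \<beta>" unfolding lnQ by (simp add: algebra_simps)
  then have Qle: "Q \<le> exp (- A * \<beta>)" using Qpos exp_ln[OF Qpos] exp_le_cancel_iff[of "ln Q" "- A * \<beta>"] by simp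
  have "la powr (-\<kappa>) * (1 - c1)^r * (1 + (p - 1) * la)^r = Q ^ r"
  proof -
    have "la powr (-\<kappa>) = (la powr (-\<beta>)) powr (real r)" unfolding \<kappa>_def by (simp add: powr_powr)
    also have "\<dots> = (la powr (-\<beta>)) ^ r" using lpos by (simp add: powr_realpow)
    finally have "la powr (-\<kappa>) = (la powr (-\<beta>)) ^ r" .
    moreover have "1 + (p - 1) * la = 1 + \<beta>" unfolding la_def using pp by simp
    ultimately show ?thesis unfolding Q_def by (simp add: power_mult_distrib)
  qed
  also have "\<dots> \<le> exp (- A * \<beta>) ^ r" using Qle Qpos by (intro power_mono) auto
  also have "\<dots> = exp (- A * \<kappa>)" unfolding \<kappa>_def by (simp add: exp_of_nat_mult[symmetric] mult_ac)
  finally have "\<epsilon> \<le> 2 * exp (- A * \<kappa>)" using b by simp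
  then have "ln \<epsilon> \<le> ln (2 * exp (- A * \<kappa>))" using eps by simp
  also have "\<dots> = ln 2 - A * \<kappa>" by (simp add: ln_mult)
  also have "\<dots> \<le> ln 3 - A * \<kappa>" by simp
  finally have "A * \<kappa> \<le> ln (3 / \<epsilon>)" using eps by (simp add: ln_div)
  then have "A * \<beta> * real r \<le> ln (3 / \<epsilon>)" unfolding \<kappa>_def by (simp add: mult_ac)
  moreover have Ab: "A * \<beta> = (c1 * c2 * pi^2) / (2 * p^2 * M)"
  proof -
    have "c2 * s > 0" using K(4) unfolding A_def by simp
    then have "s > 0" using c2 by (simp add: zero_less_mult_iff)
    moreover have "M \<noteq> 0" "\<sigma> \<noteq> 0" using K(2,3) by auto
    ultimately show ?thesis unfolding A_def \<beta>_def \<sigma>_def using pp c1 c2 by (simp add: field_simps)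
  qed
  moreover have "A * \<beta> > 0" using K(4) bpos by simp
  ultimately have rr: "real r * (A * \<beta>) \<le> ln (3 / \<epsilon>)" "A * \<beta> > 0" by (simp_all add: mult_ac)
  then have "real r \<le> ln (3 / \<epsilon>) / (A * \<beta>)" by (simp add: pos_le_divide_eq)
  also have "\<dots> = 2 / (c1 * c2 * pi\<^sup>2) * p\<^sup>2 * M * ln (3 / \<epsilon>)"
  proof -
    have "M \<noteq> 0" using K(3) by auto
    then show ?thesis unfolding Ab using pp c1 c2 by (simp add: field_simps)
  qed
  finally show ?thesis unfolding M_def .
qed


lemma bil_form_swap:
  assumes "B \<in> carrier_mat n1 n2"
  shows "bil_form B x y = (\<Sum>j<n2. (\<Sum>i<n1. x i * B $$ (i, j)) * y j)"
  using assms unfolding bil_form_def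
  by (simp add: sum.swap[of _ "{..<n1}"] sum_distrib_right)

lemma inner_factor:
  fixes D2 :: "'p::prime_card mod_ring pmf"
  assumes "B \<in> carrier_mat n1 n2"
  shows "(\<Sum>y\<in>PiE {..<n2} (\<lambda>_. UNIV). complex_of_real (\<Prod>j<n2. pmf D2 (y j)) * omega_pow (t * bil_form B x y))
    = (\<Prod>j<n2. fhat D2 (t * (\<Sum>i<n1. x i * B $$ (i, j))))"
proof -
  define w where "w j = (\<Sum>i<n1. x i * B $$ (i, j))" for j
  have "(\<Sum>y\<in>PiE {..<n2} (\<lambda>_. UNIV). complex_of_real (\<Prod>j<n2. pmf D2 (y j)) * omega_pow (t * bil_form B x y))
     = (\<Sum>y\<in>PiE {..<n2} (\<lambda>_. UNIV). \<Prod>j<n2. complex_of_real (pmf D2 (y j)) * omega_pow (t * w j * y j))"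
  proof (intro sum.cong refl)
    fix y
    have "omega_pow (t * bil_form B x y) = (\<Prod>j<n2. omega_pow (t * w j * y j))"
      unfolding bil_form_swap[OF assms] w_def[symmetric] sum_distrib_left omega_pow_sum
      by (simp add: mult.assoc)
    then show "complex_of_real (\<Prod>j<n2. pmf D2 (y j)) * omega_pow (t * bil_form B x y)
      = (\<Prod>j<n2. complex_of_real (pmf D2 (y j)) * omega_pow (t * w j * y j))"
      by (simp add: prod.distrib)
  qed
  also have "\<dots> = (\<Prod>j<n2. \<Sum>v\<in>UNIV. complex_of_real (pmf D2 v) * omega_pow (t * w j * v))"
    by (rule prod_sum_PiE[symmetric]) auto
  also have "\<dots> = (\<Prod>j<n2. fhat D2 (t * w j))" unfolding fhat_def by simp
  finally show ?thesis unfolding w_def .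
qed

lemma bias_factor:
  fixes D1 D2 :: "'p::prime_card mod_ring pmf"
  assumes "B \<in> carrier_mat n1 n2"
  shows "bias t D1 D2 B = (\<Sum>x\<in>PiE {..<n1} (\<lambda>_. UNIV). complex_of_real (\<Prod>i<n1. pmf D1 (x i))
      * (\<Prod>j<n2. fhat D2 (t * (\<Sum>i<n1. x i * B $$ (i, j)))))"
proof -
  have "bias t D1 D2 B = (\<Sum>x\<in>PiE {..<n1} (\<lambda>_. UNIV). complex_of_real (\<Prod>i<n1. pmf D1 (x i)) *
     (\<Sum>y\<in>PiE {..<n2} (\<lambda>_. UNIV). complex_of_real (\<Prod>j<n2. pmf D2 (y j)) * omega_pow (t * bil_form B x y)))"
    using assms unfolding bias_def by (simp add: sum_distrib_left mult.assoc)
  then show ?thesis by (simp only: inner_factor[OF assms])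
qed

lemma norm_bias_le:
  fixes D1 D2 :: "'p::prime_card mod_ring pmf"
  assumes "B \<in> carrier_mat n1 n2"
  shows "norm (bias t D1 D2 B) \<le> (\<Sum>x\<in>PiE {..<n1} (\<lambda>_. UNIV). (\<Prod>i<n1. pmf D1 (x i))
      * (\<Prod>j<n2. norm (fhat D2 (t * (\<Sum>i<n1. x i * B $$ (i, j))))))"
  unfolding bias_factor[OF assms]
  by (rule order_trans[OF norm_sum], rule sum_mono) (simp add: norm_mult prod_nonneg prod_norm[symmetric] del: of_real_prod)


lemma prod_if_const:
  assumes "finite J"
  shows "(\<Prod>j\<in>J. if P j then 1 else a) = (a::real) ^ card {j\<in>J. \<not> P j}"
proof -
  have "(\<Prod>j\<in>J. if P j then 1 else a) = (\<Prod>j\<in>J. if \<not> P j then a else 1)"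
    by (intro prod.cong) auto
  also have "\<dots> = (\<Prod>j\<in>{j\<in>J. \<not> P j}. a)" using prod.inter_filter[OF assms, of "\<lambda>_. a" "\<lambda>j. \<not> P j"] by simp
  also have "\<dots> = a ^ card {j\<in>J. \<not> P j}" by simp
  finally show ?thesis .
qed

lemma split_pointwise:
  fixes A \<kappa> la :: real
  assumes "finite J" "0 \<le> A" "0 < la" "la \<le> 1"
  shows "(\<Prod>j\<in>J. if w j = 0 then 1 else exp (-A))
    \<le> exp (- A * \<kappa>) + la powr (-\<kappa>) * (\<Prod>j\<in>J. if w j = 0 then 1 else la)"
proof -
  define m where "m = card {j\<in>J. \<not> w j = 0}"
  have L: "(\<Prod>j\<in>J. if w j = 0 then 1 else exp (-A)) = exp (- A * real m)"
    unfolding prod_if_const[OF assms(1)] m_def by (simp add: exp_of_nat_mult[symmetric] mult_ac)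
  have R: "(\<Prod>j\<in>J. if w j = 0 then 1 else la) = la ^ m"
    unfolding prod_if_const[OF assms(1)] m_def ..
  have nn: "0 \<le> la powr (-\<kappa>) * la ^ m" using assms by simp
  show ?thesis unfolding L R
  proof (cases "\<kappa> \<le> real m")
    case True
    then have "exp (- A * real m) \<le> exp (- A * \<kappa>)" using assms(2) by (simp add: mult_left_mono)
    then show "exp (- A * real m) \<le> exp (- A * \<kappa>) + la powr (-\<kappa>) * la ^ m" using nn by linarith
  next
    case False
    have "la powr (-\<kappa>) * la ^ m = la powr (real m - \<kappa>)"
      using assms(3) by (simp add: powr_realpow[symmetric] powr_add[symmetric])
    also have "\<dots> = exp ((real m - \<kappa>) * ln la)" using assms(3) by (simp add: powr_def)
    also have "\<dots> \<ge> 1"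
    proof -
      have "ln la \<le> 0" using assms(3,4) by simp
      then have "0 \<le> (real m - \<kappa>) * ln la" using False by (intro mult_nonpos_nonpos) auto
      then show ?thesis by simp
    qed
    finally have "1 \<le> la powr (-\<kappa>) * la ^ m" .
    moreover have "exp (- A * real m) \<le> 1" using assms(2) by simp
    moreover have "0 \<le> exp (- A * \<kappa>)" by simp
    ultimately show "exp (- A * real m) \<le> exp (- A * \<kappa>) + la powr (-\<kappa>) * la ^ m" by linarith
  qed
qed

lemma sum_if_zero_UNIV:
  "(\<Sum>v\<in>(UNIV::'a::{zero,finite} set). if v = 0 then 1 else (la::real)) = 1 + (real CARD('a) - 1) * la"
proof -
  have "(\<Sum>v\<in>(UNIV::'a set). if v = 0 then 1 else la) = 1 + (\<Sum>v\<in>UNIV - {0::'a}. if v = 0 then 1 else la)"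
    by (subst sum.remove[of UNIV 0]) auto
  also have "(\<Sum>v\<in>UNIV - {0::'a}. if v = 0 then 1 else la) = (\<Sum>v\<in>UNIV - {0::'a}. la)"
    by (intro sum.cong) auto
  also have "\<dots> = real (CARD('a) - 1) * la" by (simp add: card_Diff_singleton)
  also have "real (CARD('a) - 1) = real CARD('a) - 1"
    using card_ge_0_finite[of "UNIV::'a set"] by (simp add: of_nat_diff Suc_le_eq)
  finally show ?thesis .
qed

lemma prod_as_sum_PiE:
  assumes "finite K"
  shows "(\<Prod>k\<in>K. g (W k)) = (\<Sum>z\<in>PiE K (\<lambda>_. (UNIV::'a::finite set)). if (\<forall>k\<in>K. W k = z k) then (\<Prod>k\<in>K. g (z k)) else (0::real))"
proof -
  have "(\<Sum>z\<in>PiE K (\<lambda>_. (UNIV::'a set)). if (\<forall>k\<in>K. W k = z k) then (\<Prod>k\<in>K. g (z k)) else 0)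
      = (\<Sum>z\<in>PiE K (\<lambda>_. (UNIV::'a set)). if z = restrict W K then (\<Prod>k\<in>K. g (z k)) else 0)"
  proof (intro sum.cong refl)
    fix z assume z: "z \<in> PiE K (\<lambda>_. (UNIV::'a set))"
    have "(\<forall>k\<in>K. W k = z k) \<longleftrightarrow> z = restrict W K"
      using z by (auto simp: restrict_def PiE_def extensional_def fun_eq_iff)
    then show "(if (\<forall>k\<in>K. W k = z k) then (\<Prod>k\<in>K. g (z k)) else 0) = (if z = restrict W K then (\<Prod>k\<in>K. g (z k)) else 0)"
      by simp
  qed
  also have "\<dots> = (\<Prod>k\<in>K. g (restrict W K k))"
    using assms by (simp add: sum.delta finite_PiE)
  also have "\<dots> = (\<Prod>k\<in>K. g (W k))" by (intro prod.cong) auto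
  finally show ?thesis by simp
qed

lemma sum_transform:
  fixes f :: "'k \<Rightarrow> 'i \<Rightarrow> 'a::{field,finite}" and D :: "'a pmf"
  assumes "finite N" "finite K" "indep_on N K f" "\<And>v. pmf D v \<le> q" "0 \<le> la"
  shows "(\<Sum>x\<in>PiE N (\<lambda>_. UNIV). (\<Prod>i\<in>N. pmf D (x i)) * (\<Prod>k\<in>K. if (\<Sum>i\<in>N. f k i * x i) = 0 then 1 else la))
    \<le> q ^ card K * (1 + (real CARD('a) - 1) * la) ^ card K"
proof -
  let ?l = "\<lambda>v::'a. if v = 0 then 1 else la"
  let ?W = "\<lambda>x k. \<Sum>i\<in>N. f k i * x i"
  let ?P = "\<lambda>x. \<Prod>i\<in>N. pmf D (x i)"
  have "(\<Sum>x\<in>PiE N (\<lambda>_. UNIV). ?P x * (\<Prod>k\<in>K. ?l (?W x k)))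
     = (\<Sum>x\<in>PiE N (\<lambda>_. UNIV). \<Sum>z\<in>PiE K (\<lambda>_. (UNIV::'a set)). ?P x * (if (\<forall>k\<in>K. ?W x k = z k) then (\<Prod>k\<in>K. ?l (z k)) else 0))"
    by (subst prod_as_sum_PiE[OF assms(2)]) (simp add: sum_distrib_left)
  also have "\<dots> = (\<Sum>z\<in>PiE K (\<lambda>_. (UNIV::'a set)). (\<Prod>k\<in>K. ?l (z k)) * (\<Sum>x\<in>PiE N (\<lambda>_. UNIV). if (\<forall>k\<in>K. ?W x k = z k) then ?P x else 0))"
    by (subst sum.swap) (simp add: sum_distrib_left if_distrib mult.commute cong: if_cong)
  also have "\<dots> \<le> (\<Sum>z\<in>PiE K (\<lambda>_. (UNIV::'a set)). (\<Prod>k\<in>K. ?l (z k)) * q ^ card K)"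
    by (intro sum_mono mult_left_mono prob_bound[OF assms(1-4)] prod_nonneg) (use assms(5) in auto)
  also have "\<dots> = q ^ card K * (\<Sum>z\<in>PiE K (\<lambda>_. (UNIV::'a set)). (\<Prod>k\<in>K. ?l (z k)))"
    by (simp add: sum_distrib_left mult.commute)
  also have "\<dots> = q ^ card K * (\<Prod>k\<in>K. \<Sum>v\<in>UNIV. ?l v)"
    by (subst prod_sum_PiE) (use assms(2) in auto)
  also have "\<dots> = q ^ card K * (1 + (real CARD('a) - 1) * la) ^ card K"
    by (simp add: sum_if_zero_UNIV)
  finally show ?thesis .
qed


lemma rank_indep:
  fixes B :: "'a::field mat"
  assumes B: "B \<in> carrier_mat n1 n2"
  shows "\<exists>J \<subseteq> {..<n2}. card J = vec_space.rank n1 B \<and> indep_on {..<n1} J (\<lambda>j i. B $$ (i, j))"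
proof -
  interpret V: vec_space "TYPE('a)" n1 .
  let ?M = "module_vec TYPE('a) n1"
  let ?P = "\<lambda>T. T \<subseteq> set (cols B) \<and> \<not> module.lin_dep class_ring ?M T"
  have P0: "?P {}" unfolding V.lin_dep_def by auto
  obtain S where S: "finite S" "maximal S ?P"
    using maximal_exists_superset[of "set (cols B)" ?P "{}", OF _ _ P0] by auto
  have rk: "vec_space.rank n1 B = card S" by (rule vec_space.rank_card_indpt[OF B S(2)])
  have SP: "S \<subseteq> set (cols B)" "\<not> module.lin_dep class_ring ?M S" using S(2) unfolding maximal_def by auto
  have colsB: "set (cols B) = col B ` {..<n2}" using B unfolding cols_def by auto
  define idx where "idx v = (SOME j. j < n2 \<and> col B j = v)" for v
  have idx: "idx v < n2 \<and> col B (idx v) = v" if "v \<in> S" for v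
  proof -
    from that SP(1) colsB obtain j where "j < n2" "col B j = v" by auto
    then show ?thesis unfolding idx_def by (rule someI[where P="\<lambda>j. j < n2 \<and> col B j = v", OF conjI])
  qed
  have inj: "inj_on idx S" by (metis idx inj_onI)
  define J where "J = idx ` S"
  have Jsub: "J \<subseteq> {..<n2}" using idx unfolding J_def by auto
  have cardJ: "card J = card S" unfolding J_def using inj by (simp add: card_image)
  have Sc: "S \<subseteq> carrier_vec n1" using SP(1) B cols_dim by blast
  have ind: "indep_on {..<n1} J (\<lambda>j i. B $$ (i, j))"
    unfolding indep_on_def
  proof (intro allI impI)
    fix a assume H: "\<forall>i\<in>{..<n1}. (\<Sum>j\<in>J. a j * B $$ (i, j)) = 0"
    define a' where "a' v = a (idx v)" for v
    have lc: "module.lincomb ?M a' S = 0\<^sub>v n1"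
    proof (rule eq_vecI)
      show "dim_vec (module.lincomb ?M a' S) = dim_vec (0\<^sub>v n1)"
        using vec_space.lincomb_dim[OF S(1) Sc] by simp
      fix i assume "i < dim_vec (0\<^sub>v n1)"
      then have i: "i < n1" by simp
      have "module.lincomb ?M a' S $ i = (\<Sum>v\<in>S. a' v * v $ i)"
        by (rule vec_space.lincomb_index[OF i Sc])
      also have "\<dots> = (\<Sum>v\<in>S. a (idx v) * B $$ (i, idx v))"
      proof (intro sum.cong refl)
        fix v assume v: "v \<in> S"
        have e1: "v $ i = col B (idx v) $ i" using idx[OF v] by simp
        have jl: "idx v < n2" using idx[OF v] by simp
        have e2: "col B (idx v) $ i = B $$ (i, idx v)" by (rule index_col) (use i B jl in auto)
        show "a' v * v $ i = a (idx v) * B $$ (i, idx v)" by (simp only: a'_def e1 e2)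
      qed
      also have "\<dots> = (\<Sum>j\<in>J. a j * B $$ (i, j))" unfolding J_def using inj by (simp add: sum.reindex)
      also have "\<dots> = 0" using H i by simp
      finally show "module.lincomb ?M a' S $ i = 0\<^sub>v n1 $ i" using i by simp
    qed
    have "\<forall>v\<in>S. a' v = 0"
    proof (rule ccontr)
      assume "\<not> (\<forall>v\<in>S. a' v = 0)"
      then obtain v where "v \<in> S" "a' v \<noteq> 0" by auto
      then have "module.lin_dep class_ring ?M S"
        unfolding V.lin_dep_def using S(1) lc by (auto simp: module_vec_simps intro!: exI[of _ S])
      then show False using SP(2) by simp
    qed
    then show "\<forall>j\<in>J. a j = 0" unfolding J_def a'_def by auto
  qed
  show ?thesis using Jsub cardJ rk ind by auto
qed


theorem corollary2p4:
  fixes D1 D2 :: "'p::prime_card mod_ring pmf"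
    and c1 c2 \<epsilon> :: real
    and n1 n2 :: nat
    and B :: "'p mod_ring mat"
    and t :: "'p mod_ring"
  assumes "CARD('p) \<ge> 3"
    and "0 < c1" "c1 \<le> 1/2" "0 < c2" "c2 \<le> 1/2"
    and "\<And>x. pmf D1 x \<le> 1 - c1"
    and "\<And>x. pmf D2 x \<le> 1 - c2"
    and "\<epsilon> > 0"
    and "n1 > 0" "n2 > 0"
    and "B \<in> carrier_mat n1 n2"
    and "t \<noteq> 0"
    and "norm (bias t D1 D2 B) \<ge> \<epsilon>"
  shows "real (bil_rank B) \<le>
    2 / (c1 * c2 * pi\<^sup>2) * (real CARD('p))\<^sup>2
      * ln (2 * exp 1 * real CARD('p) / c1) * ln (3 / \<epsilon>)"
proof -
  note Bc = assms(11)
  have dims: "dim_row B = n1" "dim_col B = n2" using Bc by auto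
  obtain J where J: "J \<subseteq> {..<n2}" "card J = bil_rank B" "indep_on {..<n1} J (\<lambda>j i. B $$ (i, j))"
    using rank_indep[OF Bc] unfolding bil_rank_def dims by blast
  have finJ: "finite J" using J(1) finite_subset by blast
  define r where "r = bil_rank B"
  define A where "A = c2 * (1 - cos (2 * pi / real CARD('p))) / 2"
  have A0: "0 \<le> A" unfolding A_def using assms(4) by simp
  define w where "w x j = (\<Sum>i<n1. x i * B $$ (i, j))" for x :: "nat \<Rightarrow> 'p mod_ring" and j
  define P1 where "P1 x = (\<Prod>i<n1. pmf D1 (x i))" for x :: "nat \<Rightarrow> 'p mod_ring"
  have P1nn: "0 \<le> P1 x" for x unfolding P1_def by (simp add: prod_nonneg)
  let ?h = "\<lambda>u::'p mod_ring. if u = 0 then 1 else exp (-A)"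
  have step1: "norm (bias t D1 D2 B) \<le> (\<Sum>x\<in>PiE {..<n1} (\<lambda>_. UNIV). P1 x * (\<Prod>j\<in>J. ?h (w x j)))"
  proof -
    have "norm (bias t D1 D2 B) \<le> (\<Sum>x\<in>PiE {..<n1} (\<lambda>_. UNIV). P1 x * (\<Prod>j<n2. norm (fhat D2 (t * w x j))))"
      using norm_bias_le[OF Bc, of t D1 D2] unfolding P1_def w_def .
    also have "\<dots> \<le> (\<Sum>x\<in>PiE {..<n1} (\<lambda>_. UNIV). P1 x * (\<Prod>j\<in>J. ?h (w x j)))"
    proof (intro sum_mono mult_left_mono P1nn)
      fix x :: "nat \<Rightarrow> 'p mod_ring"
      let ?nf = "\<lambda>j. norm (fhat D2 (t * w x j))"
      have "(\<Prod>j<n2. ?nf j) = (\<Prod>j\<in>J. ?nf j) * (\<Prod>j\<in>{..<n2} - J. ?nf j)"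
        using prod.subset_diff[OF J(1)] by (simp add: mult.commute)
      also have "\<dots> \<le> (\<Prod>j\<in>J. ?nf j) * 1"
        by (intro mult_left_mono prod_le_1 prod_nonneg) (auto simp: norm_fhat_le1)
      also have "\<dots> \<le> (\<Prod>j\<in>J. ?h (w x j))"
      proof (simp, intro prod_mono conjI)
        fix j assume "j \<in> J"
        show "0 \<le> ?nf j" by simp
        show "?nf j \<le> ?h (w x j)"
        proof (cases "w x j = 0")
          case True then show ?thesis using norm_fhat_le1 by simp
        next
          case False
          then have "t * w x j \<noteq> 0" using assms(12) by simp
          then have "?nf j \<le> exp (- (c2 * (1 - cos (2 * pi / real CARD('p)))) / 2)"
            using norm_fhat_exp[of "t * w x j" c2 D2] assms(4,7) by simp
          then show ?thesis using False unfolding A_def by simp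
        qed
      qed
      finally show "(\<Prod>j<n2. ?nf j) \<le> (\<Prod>j\<in>J. ?h (w x j))" .
    qed
    finally show ?thesis .
  qed
  have step2: "\<epsilon> \<le> exp (- (c2 * (1 - cos (2*pi/real CARD('p))) / 2) * \<kappa>) + la powr (-\<kappa>) * (1 - c1)^r * (1 + (real CARD('p) - 1) * la)^r"
    if k: "0 \<le> \<kappa>" and l: "0 < la" "la \<le> 1" for \<kappa> la
  proof -
    let ?l = "\<lambda>u::'p mod_ring. if u = 0 then 1 else la"
    have "\<epsilon> \<le> (\<Sum>x\<in>PiE {..<n1} (\<lambda>_. UNIV). P1 x * (\<Prod>j\<in>J. ?h (w x j)))"
      using assms(13) step1 by linarith
    also have "\<dots> \<le> (\<Sum>x\<in>PiE {..<n1} (\<lambda>_. UNIV). P1 x * (exp (- A * \<kappa>) + la powr (-\<kappa>) * (\<Prod>j\<in>J. ?l (w x j))))"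
      by (intro sum_mono mult_left_mono P1nn split_pointwise[OF finJ A0 l])
    also have "\<dots> = exp (- A * \<kappa>) * (\<Sum>x\<in>PiE {..<n1} (\<lambda>_. UNIV). P1 x)
        + la powr (-\<kappa>) * (\<Sum>x\<in>PiE {..<n1} (\<lambda>_. UNIV). P1 x * (\<Prod>j\<in>J. ?l (w x j)))"
      by (simp add: algebra_simps sum.distrib sum_distrib_left)
    also have "(\<Sum>x\<in>PiE {..<n1} (\<lambda>_. UNIV). P1 x) = 1"
      unfolding P1_def by (rule sum_prod_pmf_PiE) simp
    also have "(\<Sum>x\<in>PiE {..<n1} (\<lambda>_. UNIV). P1 x * (\<Prod>j\<in>J. ?l (w x j)))
        \<le> (1 - c1) ^ card J * (1 + (real CARD('p mod_ring) - 1) * la) ^ card J"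
    proof -
      have "(\<Sum>x\<in>PiE {..<n1} (\<lambda>_. UNIV). P1 x * (\<Prod>j\<in>J. ?l (w x j)))
          = (\<Sum>x\<in>PiE {..<n1} (\<lambda>_. UNIV). (\<Prod>i\<in>{..<n1}. pmf D1 (x i)) *
               (\<Prod>k\<in>J. if (\<Sum>i\<in>{..<n1}. B $$ (i, k) * x i) = 0 then 1 else la))"
        unfolding P1_def w_def by (simp add: mult.commute)
      also have "\<dots> \<le> (1 - c1) ^ card J * (1 + (real CARD('p mod_ring) - 1) * la) ^ card J"
        by (rule sum_transform[OF _ finJ J(3) assms(6)]) (use l in auto)
      finally show ?thesis .
    qed
    finally have "\<epsilon> \<le> exp (- A * \<kappa>) * 1 + la powr (-\<kappa>) * ((1 - c1) ^ card J * (1 + (real CARD('p mod_ring) - 1) * la) ^ card J)"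
      by (simp add: mult_left_mono)
    then show ?thesis unfolding A_def r_def J(2) by (simp add: mult_ac)
  qed
  have p34: "real CARD('p) = 3 \<or> real CARD('p) \<ge> 4" using assms(1) by auto
  have "real r \<le> 2 / (c1 * c2 * pi\<^sup>2) * (real CARD('p))\<^sup>2 * ln (2 * exp 1 * real CARD('p) / c1) * ln (3 / \<epsilon>)"
    by (rule final_ineq[OF p34 assms(2-5,8)]) (rule step2)
  then show ?thesis unfolding r_def .
qed


end
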